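(* There exist $\alpha_0>0$ and a function $C_2(\alpha)$, polylogarithmic in $1/\alpha$, such that for every $0<\alpha\le\alpha_0$ the following holds. Let $G=(V,E)$ be a graph, $\mathcal T$ a hierarchy of $G$, $h>0$, $X\in\{0,1\}^{h\times V}$ and $U\in\mathbb R^{E\times h}$ semiorthogonal. If a non-root node $t$ is $\alpha$-bad, then there is a $2$-homogeneous set $\mathcal O'(t)\subseteq\mathcal O(t)$ that is $1/C_2(\alpha)$-dominating.
   Context: Graphs are finite, undirected, unweighted, loopless, possibly with parallel edges; each edge $e=\{u,v\}$ has a fixed orientation $u\to v$. $U\in\mathbb R^{E\times h}$ is semiorthogonal if $UU^\intercal=I$; $U^e$ is its row indexed by $e$. $X_v$ is the column of $X$ indexed by $v$, and $X_e=X_u-X_v$. A hierarchy of $G$ is a rooted tree $\mathcal T$ in which every non-leaf node has at least two children and whose leaves are in bijection with $V$; $V(t)$ is the set of vertices at the leaves of the subtree of $t$; for non-root $t$ with parent $t^*$, $\mathcal O(t)$ is the multiset of edges between $V(t)$ and $V(t^* )\setminus V(t)$. A non-root node $t$ is $\alpha$-bad if $\big(\frac1{|\mathcal O(t)|}\sum_{e\in\mathcal O(t)}\langle U^e,X_e\rangle\big)^2\ge\alpha\cdot\frac1{|\mathcal O(t)|}\sum_{e\in\mathcal O(t)}\|X_e\|_2^2$. A set $F$ of edges is $c$-homogeneous if for all $e,f\in F$: $\langle U^e,X_e\rangle^2/\langle U^f,X_f\rangle^2<c$ and $\|X_e\|_2^2/\|X_f\|_2^2<c$ (all quantities nonzero).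 A set $\mathcal O'(t)\subseteq\mathcal O(t)$ is $\gamma$-dominating if $\big(\sum_{e\in\mathcal O'(t)}\langle U^e,X_e\rangle\big)^2\ge\gamma\big(\sum_{e\in\mathcal O(t)}\langle U^e,X_e\rangle\big)^2$. *)

theory Defs
  imports Complex_Main
begin

text \<open>Graphs: vertex set V, edge identifiers E (parallel edges = distinct identifiers
with equal endpoints); each edge e is oriented src e \<rightarrow> dst e.\<close>

definition graph :: "nat set \<Rightarrow> nat set \<Rightarrow> (nat \<Rightarrow> nat) \<Rightarrow> (nat \<Rightarrow> nat) \<Rightarrow> bool" where
  "graph V E src dst \<longleftrightarrow> finite V \<and> finite E \<and>
     (\<forall>e\<in>E. src e \<in> V \<and> dst e \<in> V \<and> src e \<noteq> dst e)"

definition children :: "nat set \<Rightarrow> nat \<Rightarrow> (nat \<Rightarrow> nat) \<Rightarrow> nat \<Rightarrow> nat set" where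
  "children N r par t = {s \<in> N. s \<noteq> r \<and> par s = t}"

definition hierarchy ::
  "nat set \<Rightarrow> nat set \<Rightarrow> nat \<Rightarrow> (nat \<Rightarrow> nat) \<Rightarrow> (nat \<Rightarrow> nat) \<Rightarrow> bool" where
  "hierarchy V N r par leaf \<longleftrightarrow>
     finite N \<and> r \<in> N \<and> par r = r \<and>
     (\<forall>t\<in>N. par t \<in> N) \<and>
     (\<forall>t\<in>N. \<exists>k. (par ^^ k) t = r) \<and>
     (\<forall>t\<in>N. children N r par t \<noteq> {} \<longrightarrow> card (children N r par t) \<ge> 2) \<and>
     bij_betw leaf V {t \<in> N. children N r par t = {}}"

definition subV :: "nat set \<Rightarrow> (nat \<Rightarrow> nat) \<Rightarrow> (nat \<Rightarrow> nat) \<Rightarrow> nat \<Rightarrow> nat set" where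
  "subV V par leaf t = {v \<in> V. \<exists>k. (par ^^ k) (leaf v) = t}"

definition outE ::
  "nat set \<Rightarrow> nat set \<Rightarrow> (nat \<Rightarrow> nat) \<Rightarrow> (nat \<Rightarrow> nat) \<Rightarrow> (nat \<Rightarrow> nat) \<Rightarrow> (nat \<Rightarrow> nat) \<Rightarrow> nat \<Rightarrow> nat set" where
  "outE V E src dst par leaf t =
     {e \<in> E. (src e \<in> subV V par leaf t \<and> dst e \<in> subV V par leaf (par t) - subV V par leaf t) \<or>
            (dst e \<in> subV V par leaf t \<and> src e \<in> subV V par leaf (par t) - subV V par leaf t)}"

text \<open>U : E x h matrix (U e i), X : h x V matrix (X i v); coordinates i < h.\<close>
definition semiorthogonal :: "nat set \<Rightarrow> nat \<Rightarrow> (nat \<Rightarrow> nat \<Rightarrow> real) \<Rightarrow> bool" where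
  "semiorthogonal E h U \<longleftrightarrow>
     (\<forall>e\<in>E. \<forall>f\<in>E. (\<Sum>i<h. U e i * U f i) = (if e = f then 1 else 0))"

definition Xe :: "(nat \<Rightarrow> nat \<Rightarrow> real) \<Rightarrow> (nat \<Rightarrow> nat) \<Rightarrow> (nat \<Rightarrow> nat) \<Rightarrow> nat \<Rightarrow> nat \<Rightarrow> real" where
  "Xe X src dst e i = X i (src e) - X i (dst e)"

definition ipUX :: "nat \<Rightarrow> (nat \<Rightarrow> nat \<Rightarrow> real) \<Rightarrow> (nat \<Rightarrow> nat \<Rightarrow> real) \<Rightarrow> (nat \<Rightarrow> nat) \<Rightarrow> (nat \<Rightarrow> nat) \<Rightarrow> nat \<Rightarrow> real" where
  "ipUX h U X src dst e = (\<Sum>i<h. U e i * Xe X src dst e i)"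

definition nrmX :: "nat \<Rightarrow> (nat \<Rightarrow> nat \<Rightarrow> real) \<Rightarrow> (nat \<Rightarrow> nat) \<Rightarrow> (nat \<Rightarrow> nat) \<Rightarrow> nat \<Rightarrow> real" where
  "nrmX h X src dst e = (\<Sum>i<h. (Xe X src dst e i)^2)"

definition alpha_bad ::
  "real \<Rightarrow> nat \<Rightarrow> (nat \<Rightarrow> nat \<Rightarrow> real) \<Rightarrow> (nat \<Rightarrow> nat \<Rightarrow> real) \<Rightarrow> (nat \<Rightarrow> nat) \<Rightarrow> (nat \<Rightarrow> nat) \<Rightarrow> nat set \<Rightarrow> bool" where
  "alpha_bad \<alpha> h U X src dst Ot \<longleftrightarrow>
     ((\<Sum>e\<in>Ot. ipUX h U X src dst e) / real (card Ot))^2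
       \<ge> \<alpha> * ((\<Sum>e\<in>Ot. nrmX h X src dst e) / real (card Ot))"

definition homogeneous ::
  "real \<Rightarrow> nat \<Rightarrow> (nat \<Rightarrow> nat \<Rightarrow> real) \<Rightarrow> (nat \<Rightarrow> nat \<Rightarrow> real) \<Rightarrow> (nat \<Rightarrow> nat) \<Rightarrow> (nat \<Rightarrow> nat) \<Rightarrow> nat set \<Rightarrow> bool" where
  "homogeneous c h U X src dst F \<longleftrightarrow>
     (\<forall>e\<in>F. ipUX h U X src dst e \<noteq> 0 \<and> nrmX h X src dst e \<noteq> 0) \<and>
     (\<forall>e\<in>F. \<forall>f\<in>F.
        (ipUX h U X src dst e)^2 / (ipUX h U X src dst f)^2 < c \<and>
        nrmX h X src dst e / nrmX h X src dst f < c)"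

definition dominating ::
  "real \<Rightarrow> nat \<Rightarrow> (nat \<Rightarrow> nat \<Rightarrow> real) \<Rightarrow> (nat \<Rightarrow> nat \<Rightarrow> real) \<Rightarrow> (nat \<Rightarrow> nat) \<Rightarrow> (nat \<Rightarrow> nat) \<Rightarrow> nat set \<Rightarrow> nat set \<Rightarrow> bool" where
  "dominating \<gamma> h U X src dst Ot' Ot \<longleftrightarrow>
     (\<Sum>e\<in>Ot'. ipUX h U X src dst e)^2 \<ge> \<gamma> * (\<Sum>e\<in>Ot. ipUX h U X src dst e)^2"

end

theory Submission imports Defs "HOL-Analysis.Convex" begin

lemma bucket_exists:
  fixes x :: real
  shows "1 \<le> x \<Longrightarrow> x < 2^n \<Longrightarrow> \<exists>i<n. 2^i \<le> x \<and> x < 2^(Suc i)"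
proof (induction n)
  case 0 then show ?case by simp
next
  case (Suc n)
  show ?case
  proof (cases "x < 2^n")
    case True then show ?thesis using Suc by (meson less_SucI)
  next
    case False then show ?thesis using Suc.prems by (intro exI[of _ n]) auto
  qed
qed

lemma max_pick:
  fixes F :: "'a \<Rightarrow> real"
  assumes "finite I" "I \<noteq> {}"
  shows "\<exists>k\<in>I. sum F I \<le> real (card I) * F k"
proof -
  obtain k where k: "k \<in> I" "F k = Max (F ` I)"
    using assms Max_in[of "F ` I"] by fastforce
  have "\<And>i. i \<in> I \<Longrightarrow> F i \<le> F k" using k assms by simp
  then have "sum F I \<le> of_nat (card I) * F k" by (rule sum_bounded_above)
  then show ?thesis using k(1) by blast
qed

lemma ratio_lt2:
  fixes u v :: real
  assumes "u < 2^(Suc i)" "2^i \<le> v"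
  shows "u / v < 2"
proof -
  have v: "v > 0" using assms(2) by (smt (verit) zero_less_power)
  have "u < 2 * v" using assms by simp
  then show ?thesis using v by (simp add: divide_less_eq)
qed


lemma core:
  fixes A :: "'a set" and p q :: "'a \<Rightarrow> real" and \<alpha> :: real and n :: nat
  assumes fin: "finite A" and al: "0 < \<alpha>" "\<alpha> \<le> 1"
    and pq: "\<And>e. e \<in> A \<Longrightarrow> (p e)^2 \<le> q e"
    and Spos: "sum p A > 0"
    and bad: "(sum p A)^2 \<ge> \<alpha> * real (card A) * sum q A"
    and nbig: "512 / \<alpha>^2 < 2^n"
  shows "\<exists>B\<subseteq>A. (\<forall>e\<in>B. p e \<noteq> 0 \<and> q e \<noteq> 0) \<and>
     (\<forall>e\<in>B. \<forall>f\<in>B. (p e)^2/(p f)^2 < 2 \<and> q e / q f < 2) \<and>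
     sum p B \<ge> 3 * sum p A / (8 * real n ^ 2)"
proof -
  define S where "S = sum p A"
  define m where "m = real (card A)"
  have "A \<noteq> {}" using Spos by auto
  then have mpos: "m > 0" using fin by (simp add: m_def card_gt_0_iff)
  define a where "a = S / m"
  have apos: "a > 0" using Spos mpos by (simp add: a_def S_def)
  have Sam: "S = a * m" using mpos by (simp add: a_def)
  define K where "K = 4 / \<alpha>"
  define T where "T = 32 * a^2 / \<alpha>^2"
  have Kpos: "K > 0" using al by (simp add: K_def)
  have Tpos: "T > 0" using al apos by (simp add: T_def)
  have qnn: "\<And>e. e \<in> A \<Longrightarrow> q e \<ge> 0" using pq by (smt (verit) zero_le_power2)
  define Q where "Q = sum q A"
  have badS: "S^2 \<ge> \<alpha> * m * Q" using bad by (simp add: S_def m_def Q_def)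
  have Qb: "Q \<le> a^2 * m / \<alpha>"
  proof -
    have "\<alpha> * m * Q \<le> a^2 * m * m" using badS Sam by (simp add: power2_eq_square algebra_simps)
    then have "\<alpha> * Q \<le> a^2 * m" using mpos
      by (smt (verit) mult.assoc mult.commute mult_right_le_imp_le)
    then show ?thesis using al by (simp add: field_simps)
  qed
  define M where "M = {e\<in>A. a/4 \<le> p e \<and> p e \<le> K*a \<and> q e \<le> T}"
  define g where "g e = a/4 + (p e)^2/(K*a) + K*a*q e/T" for e
  have gnn: "g e \<ge> 0" if "e \<in> A" for e
    using qnn[OF that] apos Kpos Tpos by (simp add: g_def)
  have pg: "p e \<le> g e" if "e \<in> A - M" for e
  proof -
    have eA: "e \<in> A" using that by simp
    have t1: "(p e)^2/(K*a) \<ge> 0" using apos Kpos by simp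
    have t2: "K*a*q e/T \<ge> 0" using apos Kpos Tpos qnn[OF eA] by simp
    have nM: "\<not>(a/4 \<le> p e \<and> p e \<le> K*a \<and> q e \<le> T)" using that by (simp add: M_def)
    consider "p e < a/4" | "p e > K*a" | "a/4 \<le> p e \<and> p e \<le> K*a \<and> q e > T"
      using nM by force
    then show ?thesis
    proof cases
      case 1 then show ?thesis using t1 t2 unfolding g_def by linarith
    next
      case 2
      have "p e * (K*a) \<le> (p e)^2" using 2 Kpos apos
        unfolding power2_eq_square by (intro mult_left_mono) (auto, smt (verit) mult_pos_pos)
      then have "p e \<le> (p e)^2/(K*a)" using Kpos apos by (simp add: pos_le_divide_eq)
      then show ?thesis using t2 apos unfolding g_def by linarith
    next
      case 3
      have "K*a*T \<le> K*a*q e" using 3 Kpos apos by simp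
      then have "K*a \<le> K*a*q e/T" using Tpos by (simp add: pos_le_divide_eq)
      then show ?thesis using 3 t1 apos unfolding g_def by linarith
    qed
  qed
  have MA: "M \<subseteq> A" by (auto simp: M_def)
  have split: "S = sum p M + sum p (A - M)"
    using sum.subset_diff[OF MA fin, of p] by (simp add: S_def)
  have "sum p (A - M) \<le> sum g (A - M)" by (rule sum_mono) (use pg in auto)
  also have "\<dots> \<le> sum g A" by (rule sum_mono2) (use fin gnn in auto)
  also have "sum g A = m * (a/4) + (\<Sum>e\<in>A. (p e)^2)/(K*a) + K*a*Q/T"
    by (simp add: g_def sum.distrib sum_divide_distrib[symmetric] sum_distrib_left[symmetric] m_def Q_def)
  also have "\<dots> \<le> S/4 + S/4 + S/8"
  proof -
    have p2: "(\<Sum>e\<in>A. (p e)^2) \<le> Q" unfolding Q_def by (rule sum_mono) (use pq in auto)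
    have "(\<Sum>e\<in>A. (p e)^2)/(K*a) \<le> Q/(K*a)" using p2 Kpos apos by (simp add: divide_right_mono)
    also have "\<dots> \<le> (a^2 * m / \<alpha>)/(K*a)" using Qb Kpos apos by (intro divide_right_mono) auto
    also have "\<dots> = S/4" using al apos by (simp add: K_def Sam power2_eq_square field_simps)
    finally have A1: "(\<Sum>e\<in>A. (p e)^2)/(K*a) \<le> S/4" .
    have "K*a*Q/T = Q * (\<alpha> / (8*a))" using al apos by (simp add: K_def T_def power2_eq_square field_simps)
    also have "\<dots> \<le> (a^2 * m / \<alpha>) * (\<alpha> / (8*a))" using Qb al apos by (intro mult_right_mono) auto
    also have "\<dots> = S/8" using al apos by (simp add: Sam power2_eq_square field_simps)
    finally have A2: "K*a*Q/T \<le> S/8" .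
    have "m * (a/4) = S/4" by (simp add: Sam)
    then show ?thesis using A1 A2 by linarith
  qed
  finally have SM: "sum p M \<ge> 3*S/8" using split by linarith
  define x where "x e = 16 * (p e)^2 / a^2" for e
  define y where "y e = 16 * q e / a^2" for e
  have a2: "a^2 > 0" using apos by simp
  have xy_range: "1 \<le> x e \<and> x e < 2^n \<and> 1 \<le> y e \<and> y e < 2^n" if "e \<in> M" for e
  proof -
    have pe: "a/4 \<le> p e" "p e \<le> K*a" "q e \<le> T" "e \<in> A" using that by (auto simp: M_def)
    have "(a/4)^2 \<le> (p e)^2" using pe apos by (intro power_mono) auto
    then have x1: "1 \<le> x e" using a2 by (simp add: x_def power_divide field_simps)
    have "x e \<le> y e" using pq[OF pe(4)] a2 by (simp add: x_def y_def divide_right_mono)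
    moreover have "y e \<le> 16 * T / a^2" using pe(3) a2 by (simp add: y_def divide_right_mono)
    moreover have "16 * T / a^2 = 512 / \<alpha>^2" using a2 by (simp add: T_def field_simps)
    ultimately show ?thesis using x1 nbig by linarith
  qed
  have "n > 0"
  proof (rule ccontr)
    assume "\<not> n > 0"
    then have "512 / \<alpha>^2 < 1" using nbig by simp
    moreover have "\<alpha>^2 \<le> 1" using al by (simp add: power_le_one)
    ultimately show False using al by (simp add: field_simps)
  qed
  define I where "I = {..<n} \<times> {..<n}"
  define P where "P ij e = (2^(fst ij) \<le> x e \<and> x e < 2^(Suc (fst ij)) \<and> 2^(snd ij) \<le> y e \<and> y e < 2^(Suc (snd ij)))" for ij e
  define F where "F ij = sum p {e\<in>M. P ij e}" for ij
  have finI: "finite I" by (simp add: I_def)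
  have finM: "finite M" using fin MA finite_subset by blast
  have ppos: "p e > 0" if "e \<in> M" for e using that apos by (auto simp: M_def)
  have "sum p M \<le> (\<Sum>e\<in>M. \<Sum>ij\<in>I. if P ij e then p e else 0)"
  proof (rule sum_mono)
    fix e assume eM: "e \<in> M"
    obtain i where i: "i < n" "2^i \<le> x e" "x e < 2^(Suc i)" using bucket_exists xy_range[OF eM] by blast
    obtain j where j: "j < n" "2^j \<le> y e" "y e < 2^(Suc j)" using bucket_exists xy_range[OF eM] by blast
    have "(i,j) \<in> I" using i j by (simp add: I_def)
    moreover have "P (i,j) e" using i j by (simp add: P_def)
    ultimately have "(if P (i,j) e then p e else 0) \<le> (\<Sum>ij\<in>I. if P ij e then p e else 0)"
      using ppos[OF eM] finI by (intro member_le_sum) auto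
    then show "p e \<le> (\<Sum>ij\<in>I. if P ij e then p e else 0)" using \<open>P (i,j) e\<close> by simp
  qed
  also have "\<dots> = (\<Sum>ij\<in>I. \<Sum>e\<in>M. if P ij e then p e else 0)" by (rule sum.swap)
  also have "\<dots> = sum F I" unfolding F_def using finM by (simp add: sum.inter_filter)
  finally have SF: "sum p M \<le> sum F I" .
  have "I \<noteq> {}" using \<open>n > 0\<close> by (auto simp: I_def)
  then obtain ij where ij: "ij \<in> I" "sum F I \<le> real (card I) * F ij" using max_pick finI by blast
  have cI: "real (card I) = real n ^ 2" by (simp add: I_def card_cartesian_product power2_eq_square)
  have n2: "real n ^ 2 > 0" using \<open>n > 0\<close> by simp
  have "3*S/8 \<le> real n ^ 2 * F ij" using SM SF ij(2) unfolding cI by linarith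
  then have Fb: "3*S/(8 * real n ^ 2) \<le> F ij" using n2 by (simp add: field_simps)
  define B where "B = {e\<in>M. P ij e}"
  have BA: "B \<subseteq> A" using MA by (auto simp: B_def)
  have nz: "p e \<noteq> 0 \<and> q e \<noteq> 0" if "e \<in> B" for e
  proof -
    have eM: "e \<in> M" using that by (simp add: B_def)
    have "p e > 0" by (rule ppos[OF eM])
    moreover have "(p e)^2 \<le> q e" using pq MA eM by auto
    ultimately show ?thesis by (smt (verit) zero_less_power2)
  qed
  have hom: "(p e)^2/(p f)^2 < 2 \<and> q e / q f < 2" if "e \<in> B" "f \<in> B" for e f
  proof -
    have Pe: "P ij e" and Pf: "P ij f" using that by (auto simp: B_def)
    have "x e / x f < 2" using Pe Pf by (intro ratio_lt2[of _ "fst ij"]) (auto simp: P_def)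
    moreover have "x e / x f = (p e)^2/(p f)^2" using a2 by (simp add: x_def)
    moreover have "y e / y f < 2" using Pe Pf by (intro ratio_lt2[of _ "snd ij"]) (auto simp: P_def)
    moreover have "y e / y f = q e / q f" using a2 by (simp add: y_def)
    ultimately show ?thesis by simp
  qed
  show ?thesis
    using BA nz hom Fb by (intro exI[of _ B]) (auto simp: F_def B_def S_def)
qed


definition nA :: "real \<Rightarrow> nat" where "nA \<alpha> = 2 * nat \<lceil>log 2 (1/\<alpha>)\<rceil> + 10"

lemma ln2_half: "ln (2::real) \<ge> 1/2"
proof -
  have "ln (1/2::real) \<le> 1/2 - 1" by (rule ln_le_minus_one) simp
  moreover have "ln (1/2::real) = - ln 2" by (simp add: ln_div)
  ultimately show ?thesis by simp
qed

lemma nA_props: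
  assumes "0 < \<alpha>" "\<alpha> \<le> 1/2"
  shows "512 / \<alpha>^2 < 2^(nA \<alpha>)" "real (nA \<alpha>) \<le> 28 * ln (1/\<alpha>)"
proof -
  define l where "l = log 2 (1/\<alpha>)"
  have ia: "1/\<alpha> \<ge> 2" using assms by (simp add: field_simps)
  have l1: "l \<ge> 1" unfolding l_def using ia assms by (subst le_log_iff) auto
  define c where "c = nat \<lceil>l\<rceil>"
  have cl: "real c \<ge> l" "real c \<le> l + 1" using l1 by (auto simp: c_def)
  have "1/\<alpha> = 2 powr l" unfolding l_def using assms by simp
  also have "\<dots> \<le> 2 powr (real c)" using cl by (intro powr_mono) auto
  also have "\<dots> = 2^c" by (simp add: powr_realpow)
  finally have b: "1/\<alpha> \<le> 2^c" .
  have "(1/\<alpha>)^2 \<le> (2^c)^2" using b assms by (intro power_mono) auto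
  then have "1024 * (1/\<alpha>)^2 \<le> 1024 * (2^c)^2" by simp
  moreover have "(2::real)^(nA \<alpha>) = 1024 * (2^c)^2"
    by (simp add: nA_def c_def l_def power_add power_mult[symmetric] mult.commute)
  moreover have "512 / \<alpha>^2 < 1024 * (1/\<alpha>)^2" using assms by (simp add: power_divide divide_strict_right_mono)
  ultimately show "512 / \<alpha>^2 < 2^(nA \<alpha>)" by linarith
  have "real (nA \<alpha>) = 2 * real c + 10" by (simp add: nA_def c_def l_def)
  also have "\<dots> \<le> 14 * l" using cl l1 by linarith
  also have "l = ln (1/\<alpha>) / ln 2" by (simp add: l_def log_def)
  also have "14 * (ln (1/\<alpha>) / ln 2) \<le> 28 * ln (1/\<alpha>)"
  proof -
    have L: "ln (1/\<alpha>) \<ge> 0" using ia by simp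
    have "ln (1/\<alpha>) / ln 2 \<le> ln (1/\<alpha>) / (1/2)"
      using ln2_half L by (intro divide_left_mono) auto
    then show ?thesis by simp
  qed
  finally show "real (nA \<alpha>) \<le> 28 * ln (1/\<alpha>)" .
qed

lemma ip_le_nrm:
  assumes "semiorthogonal E h U" "e \<in> E"
  shows "(ipUX h U X src dst e)^2 \<le> nrmX h X src dst e"
proof -
  have "(\<Sum>i<h. U e i * U e i) = 1" using assms unfolding semiorthogonal_def by auto
  then have u: "(\<Sum>i<h. (U e i)^2) = 1" by (simp add: power2_eq_square)
  show ?thesis
    unfolding ipUX_def nrmX_def
    using Cauchy_Schwarz_ineq_sum[of "\<lambda>i. U e i" "\<lambda>i. Xe X src dst e i" "{..<h}"] u by simp
qed


lemma dom_step:
  fixes x s :: real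
  assumes "x \<ge> 3 * s / (8 * real n ^ 2)" "s > 0" "n > 0"
  shows "x^2 \<ge> (1 / (64/9 * real n ^ 4)) * s^2"
proof -
  have n: "real n > 0" using assms by simp
  have "0 \<le> 3 * s / (8 * real n ^ 2)" using assms n by simp
  then have "(3 * s / (8 * real n ^ 2))^2 \<le> x^2" using assms(1) by (intro power_mono) auto
  moreover have "(3 * s / (8 * real n ^ 2))^2 = (1 / (64/9 * real n ^ 4)) * s^2"
    using n by (simp add: power_divide power_mult_distrib field_simps)
  ultimately show ?thesis by simp
qed

lemma inst:
  fixes p q :: "nat \<Rightarrow> real"
  assumes fin: "finite A" and al: "0 < \<alpha>" "\<alpha> \<le> 1/2"
    and pq: "\<And>e. e \<in> A \<Longrightarrow> (p e)^2 \<le> q e"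
    and bad: "((sum p A) / real (card A))^2 \<ge> \<alpha> * ((sum q A) / real (card A))"
  shows "\<exists>B\<subseteq>A. ((\<forall>e\<in>B. p e \<noteq> 0 \<and> q e \<noteq> 0) \<and>
     (\<forall>e\<in>B. \<forall>f\<in>B. (p e)^2/(p f)^2 < 2 \<and> q e / q f < 2)) \<and>
     (sum p B)^2 \<ge> (1 / (64/9 * real (nA \<alpha>) ^ 4)) * (sum p A)^2"
proof (cases "sum p A = 0")
  case True
  then show ?thesis by (intro exI[of _ "{}"]) auto
next
  case False
  then have "A \<noteq> {}" by auto
  then have m: "real (card A) > 0" using fin by (simp add: card_gt_0_iff)
  have bad2: "(sum p A)^2 \<ge> \<alpha> * real (card A) * sum q A"
  proof -
    have "(real (card A))^2 * (\<alpha> * ((sum q A) / real (card A))) \<le>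
          (real (card A))^2 * ((sum p A) / real (card A))^2"
      using bad by (intro mult_left_mono) auto
    then show ?thesis using m by (simp add: power_divide power2_eq_square field_simps)
  qed
  have nb: "512 / \<alpha>^2 < 2^(nA \<alpha>)" using nA_props al by blast
  have npos: "nA \<alpha> > 0" by (simp add: nA_def)
  have al1: "\<alpha> \<le> 1" using al by simp
  show ?thesis
  proof (cases "sum p A > 0")
    case True
    obtain B where B: "B \<subseteq> A" "\<forall>e\<in>B. p e \<noteq> 0 \<and> q e \<noteq> 0"
        "\<forall>e\<in>B. \<forall>f\<in>B. (p e)^2/(p f)^2 < 2 \<and> q e / q f < 2"
        "sum p B \<ge> 3 * sum p A / (8 * real (nA \<alpha>) ^ 2)"
      using core[OF fin al(1) al1 pq True bad2 nb] by blast
    show ?thesis using B dom_step[OF B(4) True npos] by blast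
  next
    case False
    then have neg: "sum (\<lambda>e. - p e) A > 0" using \<open>sum p A \<noteq> 0\<close> by (simp add: sum_negf)
    have pq': "\<And>e. e \<in> A \<Longrightarrow> (- p e)^2 \<le> q e" using pq by simp
    have bad3: "(sum (\<lambda>e. - p e) A)^2 \<ge> \<alpha> * real (card A) * sum q A" using bad2 by (simp add: sum_negf)
    obtain B where B: "B \<subseteq> A" "\<forall>e\<in>B. - p e \<noteq> 0 \<and> q e \<noteq> 0"
        "\<forall>e\<in>B. \<forall>f\<in>B. (- p e)^2/(- p f)^2 < 2 \<and> q e / q f < 2"
        "sum (\<lambda>e. - p e) B \<ge> 3 * sum (\<lambda>e. - p e) A / (8 * real (nA \<alpha>) ^ 2)"
      using core[OF fin al(1) al1 pq' neg bad3 nb] by blast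
    have "(sum (\<lambda>e. - p e) B)^2 \<ge> (1 / (64/9 * real (nA \<alpha>) ^ 4)) * (sum (\<lambda>e. - p e) A)^2"
      by (rule dom_step[OF B(4) neg npos])
    then show ?thesis using B by (intro exI[of _ B]) (auto simp: sum_negf)
  qed
qed

theorem mainTheorem18:
  shows "\<exists>\<alpha>0 > (0::real). \<exists>C2 :: real \<Rightarrow> real. \<exists>c > (0::real). \<exists>k :: nat.
    (\<forall>\<alpha>. 0 < \<alpha> \<and> \<alpha> \<le> \<alpha>0 \<longrightarrow> 0 < C2 \<alpha> \<and> C2 \<alpha> \<le> c * (ln (1 / \<alpha>)) ^ k) \<and>
    (\<forall>\<alpha> V E src dst N r par leaf h U X t.
       0 < \<alpha> \<and> \<alpha> \<le> \<alpha>0 \<and>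
       graph V E src dst \<and> hierarchy V N r par leaf \<and> 0 < h \<and>
       (\<forall>i<h. \<forall>v\<in>V. X i v \<in> {0, 1}) \<and>
       semiorthogonal E h U \<and>
       t \<in> N \<and> t \<noteq> r \<and>
       alpha_bad \<alpha> h U X src dst (outE V E src dst par leaf t)
       \<longrightarrow> (\<exists>Ot' \<subseteq> outE V E src dst par leaf t.
              homogeneous 2 h U X src dst Ot' \<and>
              dominating (1 / C2 \<alpha>) h U X src dst Ot' (outE V E src dst par leaf t)))"
proof -
  define C where "C = (\<lambda>\<alpha>. 64/9 * real (nA \<alpha>) ^ 4)"
  define c :: real where "c = 64/9 * 28^4"
  have P1: "\<forall>\<alpha>. 0 < \<alpha> \<and> \<alpha> \<le> 1/2 \<longrightarrow> 0 < C \<alpha> \<and> C \<alpha> \<le> c * (ln (1 / \<alpha>)) ^ 4"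
  proof (intro allI impI conjI)
    fix \<alpha> :: real
    assume a: "0 < \<alpha> \<and> \<alpha> \<le> 1/2"
    show "0 < C \<alpha>" by (simp add: C_def nA_def)
    have "real (nA \<alpha>) ^ 4 \<le> (28 * ln (1/\<alpha>)) ^ 4"
      using nA_props(2)[of \<alpha>] a by (intro power_mono) auto
    then show "C \<alpha> \<le> c * ln (1/\<alpha>) ^ 4"
      by (simp add: power_mult_distrib C_def c_def)
  qed
  have P2: "\<forall>\<alpha> V E src dst N r par leaf h U X t.
       0 < \<alpha> \<and> \<alpha> \<le> 1/2 \<and>
       graph V E src dst \<and> hierarchy V N r par leaf \<and> 0 < h \<and>
       (\<forall>i<h. \<forall>v\<in>V. X i v \<in> {0, 1}) \<and>
       semiorthogonal E h U \<and>
       t \<in> N \<and> t \<noteq> r \<and>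
       alpha_bad \<alpha> h U X src dst (outE V E src dst par leaf t)
       \<longrightarrow> (\<exists>Ot' \<subseteq> outE V E src dst par leaf t.
              homogeneous 2 h U X src dst Ot' \<and>
              dominating (1 / C \<alpha>) h U X src dst Ot' (outE V E src dst par leaf t))"
  proof (intro allI impI)
    fix \<alpha> V E src dst N r par leaf h U X t
    assume H: "0 < \<alpha> \<and> \<alpha> \<le> 1/2 \<and>
       graph V E src dst \<and> hierarchy V N r par leaf \<and> 0 < h \<and>
       (\<forall>i<h. \<forall>v\<in>V. X i v \<in> {0, 1}) \<and>
       semiorthogonal E h U \<and>
       t \<in> N \<and> t \<noteq> r \<and>
       alpha_bad \<alpha> h U X src dst (outE V E src dst par leaf t)"
    define A where "A = outE V E src dst par leaf t"
    have AE: "A \<subseteq> E" by (auto simp: A_def outE_def)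
    have fin: "finite A" using H AE by (auto simp: graph_def intro: finite_subset)
    have pq: "\<And>e. e \<in> A \<Longrightarrow> (ipUX h U X src dst e)^2 \<le> nrmX h X src dst e"
      using ip_le_nrm H AE by blast
    have bad: "((sum (ipUX h U X src dst) A) / real (card A))^2 \<ge> \<alpha> * ((sum (nrmX h X src dst) A) / real (card A))"
      using H by (simp add: A_def alpha_bad_def)
    obtain B where "B \<subseteq> A" "homogeneous 2 h U X src dst B"
        "dominating (1 / C \<alpha>) h U X src dst B A"
      using inst[OF fin _ _ pq bad] H unfolding homogeneous_def dominating_def C_def by blast
    then show "\<exists>Ot' \<subseteq> outE V E src dst par leaf t.
              homogeneous 2 h U X src dst Ot' \<and>
              dominating (1 / C \<alpha>) h U X src dst Ot' (outE V E src dst par leaf t)"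
      unfolding A_def by blast
  qed
  have "(0::real) < 1/2" "c > 0" by (auto simp: c_def)
  then show ?thesis using P1 P2 by blast
qed

end
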